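(* Let $G$ be a strongly regular graph with parameters $(n,d,1,\mu)$ (i.e. with $\lambda=1$). Let $m$ be the number of edges of $G$, let $\theta_1\ge\theta_2\ge\cdots\ge\theta_n$ be the eigenvalues of its adjacency matrix, let $n^+$ be the number of positive eigenvalues, let $\omega=\omega(G)$ be the clique number, and let $\ell=\min(n^+,\omega)$. Then \[ \theta_1^2+\theta_2^2+\cdots+\theta_\ell^2\le \frac{2m(\omega-1)}{\omega}. \]
   Context: A strongly regular graph with parameters $(n,d,\lambda,\mu)$ is a $d$-regular graph on $n$ vertices in which every pair of adjacent vertices has exactly $\lambda$ common neighbours and every pair of distinct non-adjacent vertices has exactly $\mu$ common neighbours. Here $\mu$ denotes the SRG parameter, not an eigenvalue. *)

theory Defs
  imports Jordan_Normal_Form.Char_Poly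
begin

definition simple_graph :: "nat \<Rightarrow> (nat \<Rightarrow> nat \<Rightarrow> bool) \<Rightarrow> bool" where
  "simple_graph n E \<longleftrightarrow> (\<forall>i j. E i j \<longrightarrow> i < n \<and> j < n) \<and>
     (\<forall>i j. E i j \<longrightarrow> E j i) \<and> (\<forall>i. \<not> E i i)"

definition nbrs :: "nat \<Rightarrow> (nat \<Rightarrow> nat \<Rightarrow> bool) \<Rightarrow> nat \<Rightarrow> nat set" where
  "nbrs n E v = {u. u < n \<and> E v u}"

definition strongly_regular ::
  "nat \<Rightarrow> (nat \<Rightarrow> nat \<Rightarrow> bool) \<Rightarrow> nat \<Rightarrow> nat \<Rightarrow> nat \<Rightarrow> bool" where
  "strongly_regular n E d lam mu \<longleftrightarrow> simple_graph n E \<and>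
     (\<forall>v<n. card (nbrs n E v) = d) \<and>
     (\<forall>u<n. \<forall>v<n. E u v \<longrightarrow> card (nbrs n E u \<inter> nbrs n E v) = lam) \<and>
     (\<forall>u<n. \<forall>v<n. u \<noteq> v \<and> \<not> E u v \<longrightarrow> card (nbrs n E u \<inter> nbrs n E v) = mu)"

definition num_edges :: "nat \<Rightarrow> (nat \<Rightarrow> nat \<Rightarrow> bool) \<Rightarrow> nat" where
  "num_edges n E = card {(i, j). i < j \<and> j < n \<and> E i j}"

definition adj_matrix :: "nat \<Rightarrow> (nat \<Rightarrow> nat \<Rightarrow> bool) \<Rightarrow> real mat" where
  "adj_matrix n E = mat n n (\<lambda>(i, j). if E i j then 1 else 0)"

definition is_clique :: "nat \<Rightarrow> (nat \<Rightarrow> nat \<Rightarrow> bool) \<Rightarrow> nat set \<Rightarrow> bool" where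
  "is_clique n E C \<longleftrightarrow> C \<subseteq> {0..<n} \<and> (\<forall>u\<in>C. \<forall>v\<in>C. u \<noteq> v \<longrightarrow> E u v)"

definition clique_number :: "nat \<Rightarrow> (nat \<Rightarrow> nat \<Rightarrow> bool) \<Rightarrow> nat" where
  "clique_number n E = Max (card ` {C. is_clique n E C})"

end

theory Submission
  imports Defs "Jordan_Normal_Form.Schur_Decomposition"
begin

lemma srg_facts:
  assumes "strongly_regular n E d 1 mu"
  shows "\<And>i j. E i j \<Longrightarrow> i < n \<and> j < n" "\<And>i j. E i j \<Longrightarrow> E j i" "\<And>i. \<not> E i i"
    "\<And>v. v < n \<Longrightarrow> card (nbrs n E v) = d"
    "\<And>u v. u < n \<Longrightarrow> v < n \<Longrightarrow> E u v \<Longrightarrow> card (nbrs n E u \<inter> nbrs n E v) = 1"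
    "\<And>u v. u < n \<Longrightarrow> v < n \<Longrightarrow> u \<noteq> v \<Longrightarrow> \<not> E u v \<Longrightarrow> card (nbrs n E u \<inter> nbrs n E v) = mu"
  using assms unfolding strongly_regular_def simple_graph_def by blast+

lemma nbrs_sub: "nbrs n E v \<subseteq> {..<n}" "finite (nbrs n E v)"
  unfolding nbrs_def by auto

lemma card_val:
  assumes srg: "strongly_regular n E d 1 mu" and i: "i < n" and k: "k < n"
  shows "real (card (nbrs n E i \<inter> nbrs n E k)) = real mu + (real d - real mu) * (if k = i then 1 else 0)
      + (1 - real mu) * (if k \<in> nbrs n E i then 1 else 0)"
proof -
  note f = srg_facts[OF srg]
  consider "k = i" | "k \<noteq> i \<and> E i k" | "k \<noteq> i \<and> \<not> E i k" by blast
  then show ?thesis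
  proof cases
    case 1
    then have "k \<notin> nbrs n E i" using f(3) unfolding nbrs_def by auto
    then show ?thesis using 1 f(4)[OF i] by simp
  next
    case 2
    then have "k \<in> nbrs n E i" using k unfolding nbrs_def by auto
    then show ?thesis using 2 f(5)[OF i k] by simp
  next
    case 3
    then have "k \<notin> nbrs n E i" using k unfolding nbrs_def by auto
    then show ?thesis using 3 f(6)[OF i k] by simp
  qed
qed

lemma key:
  fixes w :: "nat \<Rightarrow> real"
  assumes srg: "strongly_regular n E d 1 mu" and i: "i < n"
  shows "(\<Sum>j\<in>nbrs n E i. \<Sum>k\<in>nbrs n E j. w k) =
     real mu * (\<Sum>k<n. w k) + (real d - real mu) * w i + (1 - real mu) * (\<Sum>k\<in>nbrs n E i. w k)"
proof -
  note f = srg_facts[OF srg]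
  have "(\<Sum>j\<in>nbrs n E i. \<Sum>k\<in>nbrs n E j. w k) = (\<Sum>j\<in>nbrs n E i. \<Sum>k<n. if E j k then w k else 0)"
    by (rule sum.cong[OF refl]) (simp add: nbrs_def sum.inter_filter[symmetric] lessThan_def)
  also have "\<dots> = (\<Sum>k<n. \<Sum>j\<in>nbrs n E i. if E j k then w k else 0)"
    by (rule sum.swap)
  also have "\<dots> = (\<Sum>k<n. w k * real (card (nbrs n E i \<inter> nbrs n E k)))"
  proof (rule sum.cong[OF refl])
    fix k assume k: "k \<in> {..<n}"
    have "(\<Sum>j\<in>nbrs n E i. if E j k then w k else 0) = (\<Sum>j\<in>{j\<in>nbrs n E i. E j k}. w k)"
      by (simp add: sum.inter_filter[symmetric] nbrs_sub)
    also have "{j\<in>nbrs n E i. E j k} = nbrs n E i \<inter> nbrs n E k"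
      using f(2) unfolding nbrs_def by auto
    finally show "(\<Sum>j\<in>nbrs n E i. if E j k then w k else 0) = w k * real (card (nbrs n E i \<inter> nbrs n E k))"
      by simp
  qed
  also have "\<dots> = (\<Sum>k<n. real mu * w k + (real d - real mu) * (if k = i then w k else 0)
      + (1 - real mu) * (if k \<in> nbrs n E i then w k else 0))"
    by (rule sum.cong[OF refl]) (simp add: card_val[OF srg i] algebra_simps)
  also have "\<dots> = real mu * (\<Sum>k<n. w k) + (real d - real mu) * (\<Sum>k<n. if k = i then w k else 0)
      + (1 - real mu) * (\<Sum>k<n. if k \<in> nbrs n E i then w k else 0)"
    by (simp only: sum.distrib sum_distrib_left)
  also have "(\<Sum>k<n. if k = i then w k else 0) = w i" using i by simp
  also have "(\<Sum>k<n. if k \<in> nbrs n E i then w k else 0) = (\<Sum>k\<in>nbrs n E i. w k)"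
  proof -
    have "{k. k < n \<and> k \<in> nbrs n E i} = nbrs n E i" using nbrs_sub[of n E i] by auto
    then show ?thesis by (simp add: sum.inter_filter[symmetric] lessThan_def)
  qed
  finally show ?thesis .
qed


definition mtr :: "real mat \<Rightarrow> real" where "mtr M = (\<Sum>i<dim_row M. M $$ (i,i))"

lemma mtr_comm: assumes "X \<in> carrier_mat n m" "Y \<in> carrier_mat m n"
  shows "mtr (X * Y) = mtr (Y * X)"
proof -
  have "mtr (X * Y) = (\<Sum>i<n. \<Sum>k<m. X $$ (i,k) * Y $$ (k,i))"
    using assms by (simp add: mtr_def scalar_prod_def atLeast0LessThan)
  also have "\<dots> = (\<Sum>k<m. \<Sum>i<n. Y $$ (k,i) * X $$ (i,k))"
    by (subst sum.swap) (simp add: mult.commute)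
  also have "\<dots> = mtr (Y * X)"
    using assms by (simp add: mtr_def scalar_prod_def atLeast0LessThan)
  finally show ?thesis .
qed

lemma traces:
  fixes A :: "real mat"
  assumes A: "A \<in> carrier_mat n n" and cp: "char_poly A = (\<Prod>a\<leftarrow>\<theta>. [:- a, 1:])"
    and len: "length \<theta> = n"
  shows "(\<Sum>i<n. \<theta>!i) = mtr A" "(\<Sum>i<n. (\<theta>!i)^2) = mtr (A * A)"
proof -
  obtain B P Q where sd: "schur_decomposition A \<theta> = (B,P,Q)" by (cases "schur_decomposition A \<theta>") auto
  from schur_decomposition[OF A cp sd]
  have sim: "similar_mat_wit A B P Q" and ut: "upper_triangular B" and dg: "diag_mat B = \<theta>" by auto
  from sim A have B: "B \<in> carrier_mat n n" and P: "P \<in> carrier_mat n n" and Q: "Q \<in> carrier_mat n n"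
    and PQ: "P * Q = 1\<^sub>m n" and QP: "Q * P = 1\<^sub>m n" and AB: "A = P * B * Q"
    unfolding similar_mat_wit_def Let_def by auto
  have diag: "\<And>i. i < n \<Longrightarrow> B $$ (i,i) = \<theta> ! i"
  proof -
    fix i assume i: "i < n"
    have "\<theta> ! i = diag_mat B ! i" using dg by simp
    also have "\<dots> = B $$ (i,i)" using B i by (simp add: diag_mat_def)
    finally show "B $$ (i,i) = \<theta> ! i" by simp
  qed
  have e1: "P * B * Q = P * (B * Q)" using P B Q by (intro assoc_mult_mat) auto
  have e2: "(B * Q) * P = B * (Q * P)" using P B Q by (intro assoc_mult_mat) auto
  have "mtr A = mtr (P * (B * Q))" using AB e1 by simp
  also have "\<dots> = mtr ((B * Q) * P)" using P B Q by (intro mtr_comm) auto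
  also have "(B * Q) * P = B" using e2 QP B by simp
  finally have trA: "mtr A = mtr B" .
  have PB: "P * B \<in> carrier_mat n n" using P B by simp
  have BB: "B * B \<in> carrier_mat n n" using B by simp
  have PBQ: "P * B * Q \<in> carrier_mat n n" using PB Q by simp
  have f1: "(P * B) * Q * ((P * B) * Q) = (P * B) * (Q * ((P * B) * Q))" by (rule assoc_mult_mat[OF PB Q PBQ])
  have f2: "Q * ((P * B) * Q) = (Q * (P * B)) * Q" by (rule assoc_mult_mat[OF Q PB Q, symmetric])
  have f3: "Q * (P * B) = (Q * P) * B" using P B Q by (intro assoc_mult_mat[symmetric]) auto
  have f4: "(P * B) * (B * Q) = ((P * B) * B) * Q" using PB B Q by (intro assoc_mult_mat[symmetric]) auto
  have f5: "(P * B) * B = P * (B * B)" using P B by (intro assoc_mult_mat) auto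
  have "A * A = (P * (B * B)) * Q" using AB f1 f2 f3 f4 f5 QP B by simp
  then have "mtr (A * A) = mtr ((P * (B * B)) * Q)" by simp
  also have "\<dots> = mtr (Q * (P * (B * B)))" using P BB Q by (intro mtr_comm) auto
  also have "Q * (P * (B * B)) = (Q * P) * (B * B)" using P BB Q by (intro assoc_mult_mat[symmetric]) auto
  also have "(Q * P) * (B * B) = B * B" unfolding QP by (rule left_mult_one_mat[OF BB])
  finally have trAA: "mtr (A * A) = mtr (B * B)" .
  show "(\<Sum>i<n. \<theta>!i) = mtr A" unfolding trA unfolding mtr_def using B diag by simp
  have "mtr (B * B) = (\<Sum>i<n. (\<theta>!i)^2)"
    unfolding mtr_def
  proof (rule sum.cong)
    show "{..<dim_row (B * B)} = {..<n}" using B by simp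
  next
    fix i assume "i \<in> {..<n}"
    then have i: "i < n" by simp
    have "(B * B) $$ (i,i) = (\<Sum>k<n. B $$ (i,k) * B $$ (k,i))"
      using B i by (simp add: scalar_prod_def atLeast0LessThan)
    also have "\<dots> = (\<Sum>k<n. if k = i then B $$ (i,i) * B $$ (i,i) else 0)"
    proof (rule sum.cong[OF refl])
      fix k assume k: "k \<in> {..<n}"
      show "B $$ (i,k) * B $$ (k,i) = (if k = i then B $$ (i,i) * B $$ (i,i) else 0)"
      proof (cases "k < i")
        case True then show ?thesis using ut B i unfolding upper_triangular_def by auto
      next
        case False
        then show ?thesis using ut B k unfolding upper_triangular_def by auto
      qed
    qed
    also have "\<dots> = (\<theta>!i)^2" using i diag by (simp add: power2_eq_square)
    finally show "(B * B) $$ (i,i) = (\<theta>!i)^2" .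
  qed
  then show "(\<Sum>i<n. (\<theta>!i)^2) = mtr (A * A)" using trAA by simp
qed


lemma adj_carrier: "adj_matrix n E \<in> carrier_mat n n"
  unfolding adj_matrix_def by simp

lemma adj_traces:
  assumes srg: "strongly_regular n E d 1 mu"
  shows "mtr (adj_matrix n E) = 0" "mtr (adj_matrix n E * adj_matrix n E) = real n * real d"
proof -
  note f = srg_facts[OF srg]
  show "mtr (adj_matrix n E) = 0" unfolding mtr_def adj_matrix_def using f(3) by simp
  have "mtr (adj_matrix n E * adj_matrix n E) = (\<Sum>i<n. \<Sum>j<n. (if E i j then 1 else 0) * (if E j i then 1 else 0 :: real))"
    unfolding mtr_def adj_matrix_def by (simp add: scalar_prod_def atLeast0LessThan)
  also have "\<dots> = (\<Sum>i<n. real d)"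
  proof (rule sum.cong[OF refl])
    fix i assume i: "i \<in> {..<n}"
    have "(\<Sum>j<n. (if E i j then 1 else 0) * (if E j i then 1 else 0 :: real)) = (\<Sum>j<n. if E i j then 1 else 0)"
      by (rule sum.cong[OF refl]) (use f(2) in auto)
    also have "\<dots> = real (card ({..<n} \<inter> Collect (E i)))"
      by (simp add: sum.If_cases)
    also have "{..<n} \<inter> Collect (E i) = nbrs n E i" unfolding nbrs_def by auto
    finally show "(\<Sum>j<n. (if E i j then 1 else 0) * (if E j i then 1 else 0 :: real)) = real d"
      using f(4) i by simp
  qed
  finally show "mtr (adj_matrix n E * adj_matrix n E) = real n * real d" by simp
qed

lemma edges:
  assumes srg: "strongly_regular n E d 1 mu"
  shows "2 * num_edges n E = n * d"
proof -
  note f = srg_facts[OF srg]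
  let ?P = "Sigma {..<n} (nbrs n E)"
  let ?P1 = "{(i, j). i < j \<and> j < n \<and> E i j}"
  let ?P2 = "{(i, j). j < i \<and> i < n \<and> E i j}"
  have "card ?P = (\<Sum>i<n. card (nbrs n E i))" by (simp add: card_SigmaI nbrs_sub)
  also have "\<dots> = n * d" using f(4) by simp
  finally have cP: "card ?P = n * d" .
  have fin: "finite ?P" by (simp add: nbrs_sub)
  have un: "?P = ?P1 \<union> ?P2"
  proof (rule Set.set_eqI)
    fix x :: "nat \<times> nat"
    obtain i j where x: "x = (i,j)" by fastforce
    have "E i j \<Longrightarrow> i \<noteq> j" using f(3) by metis
    then have "E i j \<Longrightarrow> i < j \<or> j < i" by linarith
    then show "x \<in> ?P \<longleftrightarrow> x \<in> ?P1 \<union> ?P2" unfolding x nbrs_def using f(1)[of i j] by auto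
  qed
  have sw: "?P2 = prod.swap ` ?P1"
  proof (rule Set.set_eqI)
    fix x :: "nat \<times> nat"
    obtain i j where x: "x = (i,j)" by fastforce
    have "E i j \<longleftrightarrow> E j i" using f(2) by metis
    then show "x \<in> ?P2 \<longleftrightarrow> x \<in> prod.swap ` ?P1" unfolding x by (auto simp: image_iff)
  qed
  have "card ?P2 = card ?P1" unfolding sw by (rule card_image) simp
  moreover have "finite ?P1" "finite ?P2" using fin unfolding un by simp_all
  moreover have "?P1 \<inter> ?P2 = {}" by auto
  ultimately have "card (?P1 \<union> ?P2) = 2 * card ?P1" using card_Un_disjoint[of ?P1 ?P2] by simp
  then have "card ?P = 2 * card ?P1" using un by simp
  then show ?thesis unfolding num_edges_def using cP by simp
qed

lemma deg_le:
  assumes srg: "strongly_regular n E d 1 mu" and v: "v < n"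
  shows "d + 1 \<le> n"
proof -
  note f = srg_facts[OF srg]
  have "insert v (nbrs n E v) \<subseteq> {..<n}" using v nbrs_sub by auto
  then have "card (insert v (nbrs n E v)) \<le> n" by (metis card_lessThan card_mono finite_lessThan)
  moreover have "v \<notin> nbrs n E v" using f(3) unfolding nbrs_def by auto
  ultimately show ?thesis using f(4)[OF v] nbrs_sub by simp
qed

lemma mu_le:
  assumes srg: "strongly_regular n E d 1 mu" and v: "v < n" and big: "d + 1 < n"
  shows "mu \<le> d"
proof -
  note f = srg_facts[OF srg]
  have "insert v (nbrs n E v) \<noteq> {..<n}"
  proof
    assume "insert v (nbrs n E v) = {..<n}"
    then have "card (insert v (nbrs n E v)) = n" by simp
    moreover have "v \<notin> nbrs n E v" using f(3) unfolding nbrs_def by auto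
    ultimately show False using f(4)[OF v] nbrs_sub big by simp
  qed
  moreover have "insert v (nbrs n E v) \<subseteq> {..<n}" using v nbrs_sub by auto
  ultimately obtain u where u: "u < n" "u \<noteq> v" "u \<notin> nbrs n E v" by auto
  then have "\<not> E v u" unfolding nbrs_def by auto
  then have "card (nbrs n E v \<inter> nbrs n E u) = mu" using f(6)[OF v u(1)] u by auto
  moreover have "card (nbrs n E v \<inter> nbrs n E u) \<le> card (nbrs n E v)"
    by (rule card_mono) (auto simp: nbrs_sub)
  ultimately show ?thesis using f(4)[OF v] by simp
qed

lemma clique3:
  assumes srg: "strongly_regular n E d 1 mu" and d: "d > 0" and n: "n > 0"
  shows "clique_number n E = 3"
proof -
  note f = srg_facts[OF srg]
  have fin: "finite {C. is_clique n E C}"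
    by (rule finite_subset[of _ "Pow {0..<n}"]) (auto simp: is_clique_def)
  have "nbrs n E 0 \<noteq> {}" using f(4)[OF n] d by auto
  then obtain u where u: "u < n" "E 0 u" unfolding nbrs_def by auto
  have "card (nbrs n E 0 \<inter> nbrs n E u) = 1" using f(5)[OF n u(1) u(2)] .
  then obtain w where "nbrs n E 0 \<inter> nbrs n E u = {w}" by (auto simp: card_Suc_eq)
  then have w: "w < n" "E 0 w" "E u w" unfolding nbrs_def by auto
  have "is_clique n E {0, u, w}" unfolding is_clique_def using u w n f(2) by auto
  moreover have "card {0, u, w} = 3" using f(3) u w by (metis card_3_iff)
  ultimately have mem: "3 \<in> card ` {C. is_clique n E C}" by force
  have le: "\<forall>y \<in> card ` {C. is_clique n E C}. y \<le> 3"
  proof (rule ballI, rule ccontr)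
    fix y assume "y \<in> card ` {C. is_clique n E C}" "\<not> y \<le> 3"
    then obtain C where C: "is_clique n E C" "card C \<ge> 4" by auto
    then have finC: "finite C" unfolding is_clique_def by (meson finite_atLeastLessThan finite_subset)
    obtain a where a: "a \<in> C" using C by fastforce
    have "card (C - {a}) \<ge> 3" using C a finC by simp
    then have "C - {a} \<noteq> {}" by (metis card.empty not_numeral_le_zero)
    then obtain b where b: "b \<in> C - {a}" by blast
    have "card (C - {a} - {b}) \<ge> 2" using \<open>card (C - {a}) \<ge> 3\<close> b finC by simp
    moreover have "C - {a} - {b} \<subseteq> nbrs n E a \<inter> nbrs n E b"
      using C(1) a b unfolding is_clique_def nbrs_def by auto
    ultimately have "card (nbrs n E a \<inter> nbrs n E b) \<ge> 2"
      by (meson card_mono dual_order.trans finite_Int nbrs_sub(2))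
    moreover have "E a b" "a < n" "b < n" using C(1) a b unfolding is_clique_def by auto
    ultimately show False using f(5) by fastforce
  qed
  show ?thesis unfolding clique_number_def by (rule Max_eqI) (use fin mem le in auto)
qed


lemma sum_nbrs_swap:
  fixes g :: "nat \<Rightarrow> real"
  assumes srg: "strongly_regular n E d 1 mu"
  shows "(\<Sum>i<n. \<Sum>j\<in>nbrs n E i. g j) = real d * (\<Sum>j<n. g j)"
proof -
  note f = srg_facts[OF srg]
  have "(\<Sum>i<n. \<Sum>j\<in>nbrs n E i. g j) = (\<Sum>i<n. \<Sum>j<n. if E i j then g j else 0)"
    by (rule sum.cong[OF refl]) (simp add: nbrs_def sum.inter_filter[symmetric] lessThan_def)
  also have "\<dots> = (\<Sum>j<n. \<Sum>i<n. if E i j then g j else 0)" by (rule sum.swap)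
  also have "\<dots> = (\<Sum>j<n. real d * g j)"
  proof (rule sum.cong[OF refl])
    fix j assume j: "j \<in> {..<n}"
    have "(\<Sum>i<n. if E i j then g j else 0) = (\<Sum>i\<in>{i\<in>{..<n}. E i j}. g j)"
      by (simp add: sum.inter_filter[symmetric])
    also have "{i\<in>{..<n}. E i j} = nbrs n E j"
    proof (rule Set.set_eqI)
      fix i
      have "E i j \<longleftrightarrow> E j i" using f(2) by metis
      then show "i \<in> {i\<in>{..<n}. E i j} \<longleftrightarrow> i \<in> nbrs n E j" unfolding nbrs_def by auto
    qed
    finally show "(\<Sum>i<n. if E i j then g j else 0) = real d * g j" using f(4) j by simp
  qed
  finally show ?thesis by (simp add: sum_distrib_left)
qed

lemma eig_root:
  assumes srg: "strongly_regular n E d 1 mu" and ev: "eigenvalue (adj_matrix n E) t"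
  shows "(t - real d) * (t^2 - (1 - real mu) * t - (real d - real mu)) = 0"
proof -
  note f = srg_facts[OF srg]
  let ?A = "adj_matrix n E"
  from ev obtain v where "eigenvector ?A v t" unfolding eigenvalue_def by auto
  then have v: "v \<in> carrier_vec n" and v0: "v \<noteq> 0\<^sub>v n" and Av: "?A *\<^sub>v v = t \<cdot>\<^sub>v v"
    unfolding eigenvector_def adj_matrix_def by auto
  define w where "w k = v $ k" for k
  define S where "S = (\<Sum>k<n. w k)"
  have Aw: "t * w i = (\<Sum>j\<in>nbrs n E i. w j)" if i: "i < n" for i
  proof -
    have "t * w i = (?A *\<^sub>v v) $ i" using Av i v unfolding w_def by simp
    also have "\<dots> = (\<Sum>j<n. (if E i j then 1 else 0) * w j)"
      using i v unfolding adj_matrix_def w_def by (simp add: scalar_prod_def atLeast0LessThan)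
    also have "\<dots> = (\<Sum>j<n. if E i j then w j else 0)" by (rule sum.cong) auto
    also have "\<dots> = (\<Sum>j\<in>nbrs n E i. w j)"
      by (simp add: nbrs_def sum.inter_filter[symmetric] lessThan_def)
    finally show ?thesis .
  qed
  have E1: "t^2 * w i = real mu * S + (real d - real mu) * w i + (1 - real mu) * (t * w i)" if i: "i < n" for i
  proof -
    have "(\<Sum>j\<in>nbrs n E i. \<Sum>k\<in>nbrs n E j. w k) = (\<Sum>j\<in>nbrs n E i. t * w j)"
    proof (rule sum.cong[OF refl])
      fix j assume "j \<in> nbrs n E i"
      then have "j < n" unfolding nbrs_def by auto
      then show "(\<Sum>k\<in>nbrs n E j. w k) = t * w j" using Aw by simp
    qed
    also have "\<dots> = t * (t * w i)" using Aw[OF i] by (simp add: sum_distrib_left)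
    finally show ?thesis using key[OF srg i, of w] Aw[OF i] unfolding S_def by (simp add: power2_eq_square)
  qed
  have E2: "t * S = real d * S"
  proof -
    have "t * S = (\<Sum>i<n. t * w i)" unfolding S_def by (simp add: sum_distrib_left)
    also have "\<dots> = (\<Sum>i<n. \<Sum>j\<in>nbrs n E i. w j)" by (rule sum.cong) (auto simp: Aw)
    also have "\<dots> = real d * S" unfolding S_def by (rule sum_nbrs_swap[OF srg])
    finally show ?thesis .
  qed
  show ?thesis
  proof (cases "t = real d")
    case True then show ?thesis by simp
  next
    case False
    with E2 have S0: "S = 0" by simp
    obtain i where i: "i < n" "w i \<noteq> 0"
    proof (rule ccontr)
      assume "\<not> thesis"
      with that have "\<forall>i<n. w i = 0" by blast
      then have "v = 0\<^sub>v n" using v unfolding w_def by (intro eq_vecI) auto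
      with v0 show False by simp
    qed
    from E1[OF i(1)] S0 have "(t^2 - (1 - real mu) * t - (real d - real mu)) * w i = 0"
      by (simp add: algebra_simps)
    with i(2) show ?thesis by simp
  qed
qed

lemma root_eigen:
  fixes \<theta> :: "real list"
  assumes A: "A \<in> carrier_mat n n" and cp: "char_poly A = (\<Prod>a\<leftarrow>\<theta>. [:- a, 1:])"
    and i: "i < length \<theta>"
  shows "eigenvalue A (\<theta> ! i)"
proof -
  have "poly (\<Prod>a\<leftarrow>\<theta>. [:- a, 1:]) x = (\<Prod>a\<leftarrow>\<theta>. x - a)" for x
    by (induct \<theta>) (auto simp: algebra_simps)
  moreover have "(\<Prod>a\<leftarrow>\<theta>. \<theta> ! i - a) = 0"
    using i by (simp add: prod_list_zero_iff)
  ultimately show ?thesis unfolding eigenvalue_root_char_poly[OF A] cp by simp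
qed

lemma pos_prefix:
  fixes \<theta> :: "real list"
  assumes s: "sorted_wrt (\<ge>) \<theta>" and i: "i < length (filter (\<lambda>x. x > 0) \<theta>)"
  shows "\<theta> ! i > 0"
proof (rule ccontr)
  assume "\<not> \<theta> ! i > 0"
  then have le: "\<theta> ! i \<le> 0" by simp
  have "{j. j < length \<theta> \<and> \<theta> ! j > 0} \<subseteq> {..<i}"
  proof
    fix j assume j: "j \<in> {j. j < length \<theta> \<and> \<theta> ! j > 0}"
    show "j \<in> {..<i}"
    proof (rule ccontr)
      assume "j \<notin> {..<i}"
      then have "i \<le> j" by simp
      then have "\<theta> ! j \<le> \<theta> ! i"
        using j s sorted_wrt_nth_less[OF s, of i j] by (cases "i = j") auto
      with le j show False by simp
    qed
  qed
  then have "card {j. j < length \<theta> \<and> \<theta> ! j > 0} \<le> i"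
    by (metis card_lessThan card_mono finite_lessThan)
  with i show False by (simp add: length_filter_conv_card)
qed


lemma count_sum:
  fixes P :: "nat \<Rightarrow> bool"
  shows "(\<Sum>i<n. if P i then (c::real) else 0) = c * real (card {i\<in>{..<n}. P i})"
  by (simp add: sum.If_cases Int_def)

lemma final_ineq:
  fixes d mu n :: nat
  assumes d3: "d \<ge> 3" and mu1: "mu \<ge> 1" and mud: "mu \<le> d"
    and key: "real mu * real n = real d ^ 2 - 2 * real d + real mu * real d + real mu"
  shows "3 * (real d ^ 2 + 2 * (real d - real mu)) \<le> 2 * real n * real d"
proof -
  have core: "6 * real mu * (real d - real mu) \<le> real d * (real d - 2) * (2 * real d - real mu)"
  proof (cases "d = 3")
    case True
    then have "mu = 1 \<or> mu = 2 \<or> mu = 3" using mu1 mud by auto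
    then show ?thesis using True by auto
  next
    case False
    then have d4: "real d \<ge> 4" using d3 by simp
    have a: "4 * (real mu * (real d - real mu)) \<le> real d ^ 2"
      using sum_squares_ge_zero[of "real d - 2 * real mu" 0]
      by (simp add: power2_eq_square algebra_simps)
    have b: "real d * real d * 2 \<le> real d * real d * (real d - 2)"
      using d4 by (intro mult_left_mono) auto
    have c: "real d * (real d - 2) * real d \<le> real d * (real d - 2) * (2 * real d - real mu)"
      using d4 mud by (intro mult_left_mono) auto
    have lin: "\<And>W Z V X Y :: real. 0 \<le> X \<Longrightarrow> 4*W \<le> Z + 4*V \<Longrightarrow> 4*Z \<le> X \<Longrightarrow> Y + 2*Z \<le> X + 2*W \<Longrightarrow> Y + 4*Z + 4*W \<le> 6*V + 2*X"
      by linarith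
    have "real d * real d * real mu + 4 * (real d * real d) + 4 * (real d * real mu) \<le> 6 * (real mu * real mu) + 2 * (real d * real d * real d)"
      apply (rule lin)
      using a b c by (simp_all add: power2_eq_square algebra_simps)
    then show ?thesis by (simp add: power2_eq_square algebra_simps)
  qed
  have mpos: "real mu > 0" using mu1 by simp
  have "real mu * (3 * (real d ^ 2 + 2 * (real d - real mu))) \<le> real mu * (2 * real n * real d)"
  proof -
    have "real mu * (2 * real n * real d) = 2 * real d * (real mu * real n)" by simp
    also have "\<dots> = 2 * real d * (real d ^ 2 - 2 * real d + real mu * real d + real mu)" using key by simp
    finally show ?thesis using core by (simp add: power2_eq_square algebra_simps)
  qed
  then show ?thesis using mpos by simp
qed


theorem mainTheorem5:
  fixes n d mu :: nat and E :: "nat \<Rightarrow> nat \<Rightarrow> bool" and \<theta> :: "real list"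
  assumes "strongly_regular n E d 1 mu"
    and "length \<theta> = n"
    and "sorted_wrt (\<ge>) \<theta>"
    and "char_poly (adj_matrix n E) = (\<Prod>a\<leftarrow>\<theta>. [:- a, 1:])"
  shows "(let m = num_edges n E; \<omega> = clique_number n E;
              npos = length (filter (\<lambda>x. x > 0) \<theta>);
              l = min npos \<omega>
          in (\<Sum>i<l. (\<theta> ! i)^2) \<le> 2 * real m * (real \<omega> - 1) / real \<omega>)"
proof -
  note srg = assms(1)
  note f = srg_facts[OF srg]
  define t where "t i = \<theta> ! i" for i
  define m where "m = num_edges n E"
  define \<omega> where "\<omega> = clique_number n E"
  define npos where "npos = length (filter (\<lambda>x. x > 0) \<theta>)"
  define D where "D = real d"
  define M where "M = real mu"
  have A: "adj_matrix n E \<in> carrier_mat n n" by (rule adj_carrier)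
  have s1: "(\<Sum>i<n. t i) = 0"
    using traces(1)[OF A assms(4) assms(2)] adj_traces(1)[OF srg] unfolding t_def by simp
  have s2: "(\<Sum>i<n. (t i)^2) = real n * D"
    using traces(2)[OF A assms(4) assms(2)] adj_traces(2)[OF srg] unfolding t_def D_def by simp
  have rt: "(t i - D) * ((t i)^2 - (1 - M) * t i - (D - M)) = 0" if "i < n" for i
    using eig_root[OF srg root_eigen[OF A assms(4)]] that assms(2) unfolding t_def D_def M_def by simp
  have m2: "2 * real m = real n * D"
    using edges[OF srg] unfolding m_def D_def by (metis of_nat_mult of_nat_numeral)
  have npos_card: "npos = card {i\<in>{..<n}. t i > 0}"
    unfolding npos_def length_filter_conv_card t_def using assms(2) by (simp add: lessThan_def)
  have npos_le: "npos \<le> n" unfolding npos_def using assms(2) by (metis length_filter_le)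
  have pp: "t i > 0" if "i < npos" for i
    using pos_prefix[OF assms(3)] that unfolding t_def npos_def by simp
  have goal: "(\<Sum>i<min npos \<omega>. (t i)^2) \<le> 2 * real m * (real \<omega> - 1) / real \<omega>"
  proof (cases "n = 0 \<or> d = 0")
    case True
    then have "real n * D = 0" unfolding D_def by auto
    then have "\<forall>i\<in>{..<n}. (t i)^2 = 0" using s2 by (subst sum_nonneg_eq_0_iff[symmetric]) auto
    then have "{i\<in>{..<n}. t i > 0} = {}" by auto
    then have "npos = 0" using npos_card by simp
    moreover have "m = 0" using m2 \<open>real n * D = 0\<close> by simp
    ultimately show ?thesis by simp
  next
    case False
    then have n0: "0 < n" and d0: "0 < d" by auto
    have om: "\<omega> = 3" unfolding \<omega>_def by (rule clique3[OF srg d0 n0])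
    have rhs: "2 * real m * (real \<omega> - 1) / real \<omega> = 2 * real n * D / 3"
      using m2 om by simp
    have dn: "d + 1 \<le> n" by (rule deg_le[OF srg n0])
    have key1: "D * D = M * real n + (D - M) + (1 - M) * D"
    proof -
      have "(\<Sum>j\<in>nbrs n E 0. \<Sum>k\<in>nbrs n E j. (1::real)) = (\<Sum>j\<in>nbrs n E 0. D)"
      proof (rule sum.cong[OF refl])
        fix j assume "j \<in> nbrs n E 0"
        then have "j < n" unfolding nbrs_def by auto
        then show "(\<Sum>k\<in>nbrs n E j. (1::real)) = D" using f(4) unfolding D_def by simp
      qed
      also have "\<dots> = D * D" using f(4)[OF n0] unfolding D_def by simp
      finally show ?thesis using key[OF srg n0, of "\<lambda>_. 1"] f(4)[OF n0] unfolding D_def M_def by simp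
    qed
    have sq: "(\<Sum>i<n. (t i)^2 - (1 - M) * t i - (D - M)) = M * real n"
    proof -
      have "(\<Sum>i<n. (t i)^2 - (1 - M) * t i - (D - M)) = (\<Sum>i<n. (t i)^2) - (1 - M) * (\<Sum>i<n. t i) - real n * (D - M)"
        by (simp add: sum_subtractf sum_distrib_left)
      then show ?thesis using s1 s2 by (simp add: algebra_simps)
    qed
    show ?thesis
    proof (cases "mu = 0")
      case True
      then have M0: "M = 0" unfolding M_def by simp
      have D2: "D = 2" using key1 M0 d0 unfolding D_def by (simp add: algebra_simps)
      have vals: "t i = 2 \<or> t i = -1" if "i < n" for i
      proof -
        have "(t i - 2) * ((t i - 2) * (t i + 1)) = 0" using rt[OF that] D2 M0
          by (simp add: algebra_simps power2_eq_square)
        then show ?thesis by auto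
      qed
      have tv: "t i = 3 * (if t i = 2 then 1 else 0) - 1" if "i < n" for i using vals[OF that] by auto
      have "(\<Sum>i<n. t i) = (\<Sum>i<n. 3 * (if t i = 2 then 1 else 0) - 1)" by (rule sum.cong) (auto simp: tv[symmetric])
      also have "\<dots> = 3 * (\<Sum>i<n. if t i = 2 then 1 else 0) - real n"
        by (simp add: sum_subtractf sum_distrib_left)
      also have "(\<Sum>i<n. if t i = 2 then 1 else 0 :: real) = real (card {i\<in>{..<n}. t i = 2})"
        using count_sum[where P="\<lambda>i. t i = 2" and n=n and c=1] by simp
      finally have c3: "3 * real (card {i\<in>{..<n}. t i = 2}) = real n" using s1 by simp
      have "{i\<in>{..<n}. t i > 0} = {i\<in>{..<n}. t i = 2}" using vals by force
      then have np3: "3 * real npos = real n" using c3 npos_card by simp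
      have "(\<Sum>i<min npos \<omega>. (t i)^2) = (\<Sum>i<min npos \<omega>. 4)"
      proof (rule sum.cong[OF refl])
        fix i assume "i \<in> {..<min npos \<omega>}"
        then have "i < npos" by simp
        then have "t i > 0" "i < n" using pp npos_le by auto
        then have "t i = 2" using vals by force
        then show "(t i)^2 = 4" by simp
      qed
      also have "\<dots> = 4 * real (min npos \<omega>)" by simp
      also have "\<dots> \<le> 4 * real npos" by simp
      finally show ?thesis unfolding rhs D2 using np3 by simp
    next
      case False
      then have M1: "M \<ge> 1" unfolding M_def by simp
      have qd: "D^2 - (1 - M) * D - (D - M) = M * real n" using key1 by (simp add: algebra_simps power2_eq_square)
      have qt: "(t i)^2 - (1 - M) * t i - (D - M) = (if t i = D then M * real n else 0)" if "i < n" for i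
      proof (cases "t i = D")
        case True then show ?thesis using qd by simp
      next
        case False then show ?thesis using rt[OF that] by simp
      qed
      have "(\<Sum>i<n. (t i)^2 - (1 - M) * t i - (D - M)) = (\<Sum>i<n. if t i = D then M * real n else 0)"
        by (rule sum.cong) (auto simp: qt)
      also have "\<dots> = M * real n * real (card {i\<in>{..<n}. t i = D})" by (rule count_sum)
      finally have "M * real n * real (card {i\<in>{..<n}. t i = D}) = M * real n" using sq by simp
      moreover have "M * real n \<noteq> 0" using M1 n0 by simp
      ultimately have "real (card {i\<in>{..<n}. t i = D}) = 1" by (metis mult.right_neutral mult_left_cancel)
      then have c1: "card {i\<in>{..<n}. t i = D} = 1" by simp
      have cl: "card {i\<in>{..<min npos \<omega>}. t i = D} \<le> 1"
      proof -
        have "{i\<in>{..<min npos \<omega>}. t i = D} \<subseteq> {i\<in>{..<n}. t i = D}" using npos_le by auto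
        then have "card {i\<in>{..<min npos \<omega>}. t i = D} \<le> card {i\<in>{..<n}. t i = D}" by (intro card_mono) auto
        then show ?thesis using c1 by simp
      qed
      have keyn: "M * real n = D^2 - 2 * D + M * D + M" using key1 by (simp add: algebra_simps power2_eq_square)
      have rdn: "real d + 1 \<le> real n" using dn by simp
      have D2: "D \<ge> 2"
      proof -
        have "M * (real n - D - 1) \<ge> 0" using M1 rdn unfolding D_def by (intro mult_nonneg_nonneg) auto
        moreover have "D * D = M * (real n - D - 1) + 2 * D" using key1 by (simp add: algebra_simps)
        ultimately have "2 * D \<le> D * D" by linarith
        moreover have "D > 0" using d0 unfolding D_def by simp
        ultimately show ?thesis by (simp add: mult_le_cancel_right_pos)
      qed
      show ?thesis
      proof (cases "d = 2")
        case True
        then have Dv: "D = 2" unfolding D_def by simp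
        have n3: "n = 3"
        proof -
          have "M * (real n - 3) = 0" using keyn Dv by (simp add: algebra_simps)
          then show ?thesis using M1 by simp
        qed
        have "(\<Sum>i<n. (t i + 1)^2) = (\<Sum>i<n. (t i)^2 + 2 * t i + 1)"
          by (rule sum.cong[OF refl]) (simp add: power2_eq_square algebra_simps)
        also have "\<dots> = (\<Sum>i<n. (t i)^2) + (\<Sum>i<n. 2 * t i) + (\<Sum>i<n. 1)"
          by (simp only: sum.distrib)
        also have "\<dots> = (\<Sum>i<n. (t i)^2) + 2 * (\<Sum>i<n. t i) + real n"
          by (simp only: sum_distrib_left[symmetric]) simp
        also have "\<dots> = 9" using s1 s2 n3 Dv by simp
        finally have s9: "(\<Sum>i<n. (t i + 1)^2) = 9" .
        define g where "g i = (if t i = D then 0 else (t i + 1)^2)" for i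
        have "(\<Sum>i<n. (t i + 1)^2) = (\<Sum>i<n. g i + (if t i = D then 9 else 0))"
          by (rule sum.cong[OF refl]) (simp add: g_def Dv)
        also have "\<dots> = (\<Sum>i<n. g i) + (\<Sum>i<n. if t i = D then 9 else 0)" by (simp only: sum.distrib)
        also have "(\<Sum>i<n. if t i = D then 9 else 0) = (9::real)"
          using count_sum[where P="\<lambda>i. t i = D" and n=n and c=9] c1 by simp
        finally have "(\<Sum>i<n. g i) = 0" using s9 by linarith
        moreover have "\<forall>i\<in>{..<n}. 0 \<le> g i" by (simp add: g_def)
        ultimately have g0: "\<forall>i\<in>{..<n}. g i = 0" using sum_nonneg_eq_0_iff[of "{..<n}" g] by simp
        have allD: "t i = D" if "i < min npos \<omega>" for i
        proof (rule ccontr)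
          assume ne: "t i \<noteq> D"
          have "i < npos" "i < n" using that npos_le by auto
          then have tp: "t i > 0" using pp by simp
          have "g i = 0" using g0 \<open>i < n\<close> by simp
          then have "(t i + 1)^2 = 0" using ne unfolding g_def by simp
          then have "t i = -1" by simp
          then show False using tp by simp
        qed
        have "{i\<in>{..<min npos \<omega>}. t i = D} = {..<min npos \<omega>}" using allD by blast
        then have l1: "min npos \<omega> \<le> 1" using cl by simp
        have "(\<Sum>i<min npos \<omega>. (t i)^2) = (\<Sum>i<min npos \<omega>. D^2)"
        proof (rule sum.cong[OF refl])
          fix i assume "i \<in> {..<min npos \<omega>}"
          then have "t i = D" using allD by simp
          then show "(t i)^2 = D^2" by simp
        qed
        also have "\<dots> = real (min npos \<omega>) * D^2" by simp
        also have "\<dots> \<le> 1 * D^2" using l1 by (intro mult_right_mono) auto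
        also have "\<dots> = 2 * real n * D / 3" using n3 Dv by simp
        finally show ?thesis unfolding rhs .
      next
        case False
        then have d3: "d \<ge> 3" using D2 unfolding D_def by simp
        have big: "d + 1 < n"
        proof -
          have "M * (real n - D - 1) = D^2 - 2 * D" using keyn by (simp add: algebra_simps)
          moreover have "D^2 - 2 * D > 0"
          proof -
            have "3 * D \<le> D * D" using d3 unfolding D_def by (intro mult_right_mono) auto
            moreover have "D > 0" using d3 unfolding D_def by simp
            ultimately show ?thesis by (simp add: power2_eq_square)
          qed
          ultimately have "0 < M * (real n - D - 1)" by simp
          then have "real n - D - 1 > 0" using M1 by (simp add: zero_less_mult_iff)
          then show ?thesis unfolding D_def by simp
        qed
        have mud: "mu \<le> d" by (rule mu_le[OF srg n0 big])
        have bnd: "(t i)^2 \<le> (D - M) + (if t i = D then D^2 - (D - M) else 0)" if "i < min npos \<omega>" for i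
        proof (cases "t i = D")
          case True then show ?thesis by simp
        next
          case False
          have "i < npos" "i < n" using that npos_le by auto
          then have tp: "t i > 0" using pp by simp
          have q0: "(t i)^2 - (1 - M) * t i - (D - M) = 0" using rt[OF \<open>i < n\<close>] False by simp
          have "(1 - M) * t i \<le> 0" using M1 tp by (simp add: mult_nonpos_nonneg)
          then show ?thesis using q0 False by simp
        qed
        have "(\<Sum>i<min npos \<omega>. (t i)^2) \<le> (\<Sum>i<min npos \<omega>. (D - M) + (if t i = D then D^2 - (D - M) else 0))"
          by (rule sum_mono) (use bnd in auto)
        also have "\<dots> = real (min npos \<omega>) * (D - M) + (D^2 - (D - M)) * real (card {i\<in>{..<min npos \<omega>}. t i = D})"
          by (simp add: sum.distrib count_sum)
        also have "\<dots> \<le> 3 * (D - M) + (D^2 - (D - M)) * 1"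
        proof (rule add_mono)
          show "real (min npos \<omega>) * (D - M) \<le> 3 * (D - M)"
            using om mud unfolding D_def M_def by (intro mult_right_mono) auto
          have "2 * D \<le> D * D" using D2 by (intro mult_right_mono) auto
          then have "D^2 - (D - M) \<ge> 0" using D2 M1 unfolding power2_eq_square by linarith
          then show "(D^2 - (D - M)) * real (card {i\<in>{..<min npos \<omega>}. t i = D}) \<le> (D^2 - (D - M)) * 1"
            using cl by (intro mult_left_mono) auto
        qed
        also have "\<dots> \<le> 2 * real n * D / 3"
        proof -
          have mu1: "mu \<ge> 1" using M1 unfolding M_def by simp
          have "3 * (D^2 + 2 * (D - M)) \<le> 2 * real n * D"
            using final_ineq[of d mu n, OF d3 mu1 mud] keyn unfolding D_def M_def by simp
          then show ?thesis by (simp add: field_simps)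
        qed
        finally show ?thesis unfolding rhs .
      qed
    qed
  qed
  then show ?thesis unfolding Let_def m_def \<omega>_def npos_def t_def by simp
qed

end
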